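(* Let $n\ge 1$ and let $A\subseteq \mathbb{F}_3^n$ be a set such that the equation $a+b+c=0$ with $a,b,c\in A$ has no solutions except the trivial ones $a=b=c$. Then $$|A|\le 3\sum_{k=0}^{\lfloor 2n/3\rfloor}\binom{n}{k}_2 .$$
   Context: $\mathbb{F}_3=\{0,1,2\}$ is the field of integers modulo $3$. For integers $n\ge 0$ and $k$, the trinomial coefficient $\binom{n}{k}_2$ is defined as the coefficient of $x^k$ in $(1+x+x^2)^n$. *)

theory Defs
  imports "HOL-Analysis.Analysis" "HOL-Library.Numeral_Type" "HOL-Computational_Algebra.Polynomial"
begin

definition trinomial :: "nat \<Rightarrow> nat \<Rightarrow> nat" where
  "trinomial n k = coeff ([:1, 1, 1:] ^ n) k"

end

theory Submission
  imports Defs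
begin

lemma ex3: "(x::3) = 0 \<or> x = 1 \<or> x = 2"
proof (induct x)
  case (of_int z)
  then have "z = 0 \<or> z = 1 \<or> z = 2" by auto
  then show ?case by auto
qed

lemma sq3: "(x::3) \<noteq> 0 \<Longrightarrow> x * x = 1" using ex3[of x] by auto
lemma nz3: "(x::3) \<noteq> 0 \<Longrightarrow> (y::3) \<noteq> 0 \<Longrightarrow> x * y \<noteq> 0" using ex3[of x] ex3[of y] by auto
lemma three3: "(x::3) + x + x = 0" using ex3[of x] by auto

lemma core:
  fixes f :: "'j \<Rightarrow> 'a \<Rightarrow> 3"
  assumes "finite J" "finite A" "card J < card A"
  shows "\<exists>h. (\<exists>a\<in>A. h a \<noteq> 0) \<and> (\<forall>j\<in>J. (\<Sum>a\<in>A. f j a * h a) = 0)"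
  using assms
proof (induction J arbitrary: A f rule: finite_induct)
  case empty
  then have "A \<noteq> {}" by auto
  then obtain a where "a \<in> A" by blast
  then show ?case by (intro exI[of _ "\<lambda>_. 1"]) auto
next
  case (insert j0 J)
  show ?case
  proof (cases "\<forall>a\<in>A. f j0 a = 0")
    case True
    have "card J < card A" using insert by simp
    then obtain h where h: "\<exists>a\<in>A. h a \<noteq> 0" "\<forall>j\<in>J. (\<Sum>a\<in>A. f j a * h a) = 0"
      using insert.IH[OF insert.prems(1)] by blast
    show ?thesis using h True by (intro exI[of _ h]) auto
  next
    case False
    then obtain a0 where a0: "a0 \<in> A" "f j0 a0 \<noteq> 0" by blast
    define c where "c = f j0 a0"
    have cc: "c * c = 1" using sq3 a0 c_def by auto
    define A' where "A' = A - {a0}"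
    have fA': "finite A'" using insert A'_def by auto
    have cA': "card J < card A'" using insert a0 A'_def by (simp add: card_Diff_singleton)
    define f' where "f' j a = f j a - f j a0 * c * f j0 a" for j a
    obtain h' where h': "\<exists>a\<in>A'. h' a \<noteq> 0" "\<forall>j\<in>J. (\<Sum>a\<in>A'. f' j a * h' a) = 0"
      using insert.IH[OF fA' cA'] by blast
    define S where "S = (\<Sum>a\<in>A'. f j0 a * h' a)"
    define h where "h a = (if a = a0 then - c * S else h' a)" for a
    have hA': "(\<Sum>a\<in>A'. g a * h a) = (\<Sum>a\<in>A'. g a * h' a)" for g
      by (rule sum.cong) (auto simp: h_def A'_def)
    have split: "(\<Sum>a\<in>A. g a * h a) = g a0 * (- c * S) + (\<Sum>a\<in>A'. g a * h' a)" for g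
    proof -
      have "(\<Sum>a\<in>A. g a * h a) = g a0 * h a0 + (\<Sum>a\<in>A'. g a * h a)"
        unfolding A'_def by (rule sum.remove[OF insert.prems(1) a0(1)])
      then show ?thesis using hA' by (simp add: h_def)
    qed
    show ?thesis
    proof (intro exI[of _ h] conjI ballI)
      show "\<exists>a\<in>A. h a \<noteq> 0" using h' by (auto simp: h_def A'_def)
    next
      fix j assume "j \<in> insert j0 J"
      then consider "j = j0" | "j \<in> J" by blast
      then show "(\<Sum>a\<in>A. f j a * h a) = 0"
      proof cases
        case 1
        have "(\<Sum>a\<in>A. f j a * h a) = c * (- c * S) + S" using split[of "f j0"] 1 by (simp add: c_def S_def)
        also have "\<dots> = - ((c * c) * S) + S" by (simp add: algebra_simps)
        also have "\<dots> = 0" using cc by simp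
        finally show ?thesis .
      next
        case 2
        have e: "(\<Sum>a\<in>A'. f j a * h' a) = f j a0 * c * S"
        proof -
          have "0 = (\<Sum>a\<in>A'. f' j a * h' a)" using h' 2 by simp
          also have "\<dots> = (\<Sum>a\<in>A'. f j a * h' a - f j a0 * c * (f j0 a * h' a))"
            by (rule sum.cong) (auto simp: f'_def algebra_simps)
          also have "\<dots> = (\<Sum>a\<in>A'. f j a * h' a) - f j a0 * c * S"
            by (simp add: S_def sum_subtractf sum_distrib_left)
          finally show ?thesis by simp
        qed
        show ?thesis using split[of "f j"] e by (simp add: algebra_simps)
      qed
    qed
  qed
qed

lemma supp:
  fixes f :: "'j \<Rightarrow> 'a \<Rightarrow> 3"
  assumes fJ: "finite J" and fA: "finite A"
  shows "\<exists>h. (\<forall>j\<in>J. (\<Sum>a\<in>A. f j a * h a) = 0) \<and> card A \<le> card {a\<in>A. h a \<noteq> 0} + card J"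
proof -
  have main: "k + card J \<le> card A \<Longrightarrow> \<exists>h. (\<forall>j\<in>J. (\<Sum>a\<in>A. f j a * h a) = 0) \<and> k \<le> card {a\<in>A. h a \<noteq> 0}" for k
  proof (induction k)
    case 0
    show ?case by (intro exI[of _ "\<lambda>_. 0"]) auto
  next
    case (Suc k)
    then obtain h where h: "\<forall>j\<in>J. (\<Sum>a\<in>A. f j a * h a) = 0" "k \<le> card {a\<in>A. h a \<noteq> 0}" by auto
    define T where "T = {a\<in>A. h a \<noteq> 0}"
    have fT: "finite T" using fA T_def by auto
    show ?case
    proof (cases "Suc k \<le> card T")
      case True then show ?thesis using h T_def by blast
    next
      case False
      then have cT: "card T = k" using h T_def by simp
      define g :: "'j + 'a \<Rightarrow> 'a \<Rightarrow> 3" where "g = case_sum f (\<lambda>t a. if a = t then 1 else 0)"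
      have "card (J <+> T) < card A" using Suc.prems cT fJ fT by (simp add: card_Plus)
      then obtain w where w: "\<exists>a\<in>A. w a \<noteq> 0" "\<forall>i\<in>J <+> T. (\<Sum>a\<in>A. g i a * w a) = 0"
        using core[of "J <+> T" A g] fJ fT fA by auto
      have wJ: "\<forall>j\<in>J. (\<Sum>a\<in>A. f j a * w a) = 0"
      proof (intro ballI)
        fix j assume "j \<in> J"
        then have "Inl j \<in> J <+> T" by (rule InlI)
        from w(2)[rule_format, OF this] show "(\<Sum>a\<in>A. f j a * w a) = 0" by (simp add: g_def)
      qed
      have wT: "w t = 0" if "t \<in> T" for t
      proof -
        have tA: "t \<in> A" using that T_def by auto
        have "(\<Sum>a\<in>A. g (Inr t) a * w a) = 0" using w(2) that by auto
        moreover have "(\<Sum>a\<in>A. g (Inr t) a * w a) = (\<Sum>a\<in>A. if a = t then w a else 0)"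
          by (rule sum.cong) (auto simp: g_def)
        moreover have "(\<Sum>a\<in>A. if a = t then w a else 0) = w t" using tA fA by (simp add: sum.delta)
        ultimately show ?thesis by simp
      qed
      obtain a1 where a1: "a1 \<in> A" "w a1 \<noteq> 0" using w(1) by blast
      have a1T: "a1 \<notin> T" using a1 wT by auto
      define h2 where "h2 a = h a + w a" for a
      have sol: "\<forall>j\<in>J. (\<Sum>a\<in>A. f j a * h2 a) = 0"
        using h(1) wJ by (simp add: h2_def distrib_left sum.distrib)
      have sub: "insert a1 T \<subseteq> {a\<in>A. h2 a \<noteq> 0}"
        using a1 a1T wT by (auto simp: h2_def T_def)
      have "Suc k = card (insert a1 T)" using cT fT a1T by simp
      also have "\<dots> \<le> card {a\<in>A. h2 a \<noteq> 0}" using sub fA by (intro card_mono) auto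
      finally show ?thesis using sol by blast
    qed
  qed
  show ?thesis
  proof (cases "card J \<le> card A")
    case True
    from main[of "card A - card J"] True obtain h where
      "(\<forall>j\<in>J. (\<Sum>a\<in>A. f j a * h a) = 0)" "card A - card J \<le> card {a\<in>A. h a \<noteq> 0}" by auto
    then show ?thesis by (intro exI[of _ h]) auto
  next
    case False
    then show ?thesis by (intro exI[of _ "\<lambda>_. 0"]) auto
  qed
qed

lemma swap_lemma: "(\<Sum>z\<in>A. \<Sum>i\<in>I. a i * b i z) = (\<Sum>i\<in>I. (a i :: 'c::comm_ring_1) * (\<Sum>z\<in>A. b i z))"
  by (subst sum.swap) (simp add: sum_distrib_left)

lemma diag:
  fixes u v :: "'i \<Rightarrow> 'a \<Rightarrow> 3" and M :: "'a \<Rightarrow> 'a \<Rightarrow> 3"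
  assumes fI: "finite I" and fA: "finite A"
    and dec: "\<And>x y. x \<in> A \<Longrightarrow> y \<in> A \<Longrightarrow> M x y = (\<Sum>i\<in>I. u i x * v i y)"
    and off: "\<And>x y. x \<in> A \<Longrightarrow> y \<in> A \<Longrightarrow> x \<noteq> y \<Longrightarrow> M x y = 0"
  shows "card {x\<in>A. M x x \<noteq> 0} \<le> card I"
proof (rule ccontr)
  define S where "S = {x\<in>A. M x x \<noteq> 0}"
  assume "\<not> card {x\<in>A. M x x \<noteq> 0} \<le> card I"
  then have "card I < card S" by (simp add: S_def)
  moreover have fS: "finite S" using fA S_def by auto
  ultimately obtain h where h: "\<exists>a\<in>S. h a \<noteq> 0" "\<forall>i\<in>I. (\<Sum>a\<in>S. v i a * h a) = 0"
    using core[of I S v] fI by auto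
  then obtain x0 where x0: "x0 \<in> S" "h x0 \<noteq> 0" by blast
  have x0A: "x0 \<in> A" "M x0 x0 \<noteq> 0" using x0 S_def by auto
  have SA: "S \<subseteq> A" using S_def by auto
  have "(\<Sum>y\<in>S. M x0 y * h y) = M x0 x0 * h x0 + (\<Sum>y\<in>S - {x0}. M x0 y * h y)"
    by (rule sum.remove[OF fS x0(1)])
  also have "(\<Sum>y\<in>S - {x0}. M x0 y * h y) = 0"
  proof (intro sum.neutral ballI)
    fix y assume "y \<in> S - {x0}"
    then show "M x0 y * h y = 0" using off[of x0 y] x0A SA by auto
  qed
  finally have e1: "(\<Sum>y\<in>S. M x0 y * h y) \<noteq> 0" using nz3[OF x0A(2) x0(2)] by simp
  have "(\<Sum>y\<in>S. M x0 y * h y) = (\<Sum>y\<in>S. \<Sum>i\<in>I. u i x0 * (v i y * h y))"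
    using dec x0A SA by (intro sum.cong) (auto simp: sum_distrib_right mult.assoc)
  also have "\<dots> = (\<Sum>i\<in>I. u i x0 * (\<Sum>y\<in>S. v i y * h y))"
    by (rule swap_lemma)
  also have "\<dots> = 0" using h(2) by simp
  finally show False using e1 by simp
qed

lemma slice:
  fixes F :: "'a \<Rightarrow> 'a \<Rightarrow> 'a \<Rightarrow> 3"
  assumes f1: "finite I1" and f2: "finite I2" and f3: "finite I3" and fA: "finite A"
    and dec: "\<And>x y z. x \<in> A \<Longrightarrow> y \<in> A \<Longrightarrow> z \<in> A \<Longrightarrow> F x y z =
       (\<Sum>i\<in>I1. pa i x * qa i y z) + (\<Sum>i\<in>I2. pb i y * qb i x z) + (\<Sum>i\<in>I3. pc i z * qc i x y)"
    and off: "\<And>x y z. x \<in> A \<Longrightarrow> y \<in> A \<Longrightarrow> z \<in> A \<Longrightarrow> F x y z \<noteq> 0 \<Longrightarrow> x = y \<and> y = z"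
    and dg: "\<And>x. x \<in> A \<Longrightarrow> F x x x \<noteq> 0"
  shows "card A \<le> card I1 + card I2 + card I3"
proof -
  obtain h where h: "\<forall>j\<in>I3. (\<Sum>a\<in>A. pc j a * h a) = 0" "card A \<le> card {a\<in>A. h a \<noteq> 0} + card I3"
    using supp[OF f3 fA, of pc] by blast
  define M where "M x y = (\<Sum>z\<in>A. F x y z * h z)" for x y
  define u where "u = case_sum pa (\<lambda>i x. \<Sum>z\<in>A. qb i x z * h z)"
  define v where "v = case_sum (\<lambda>i y. \<Sum>z\<in>A. qa i y z * h z) pb"
  have decM: "M x y = (\<Sum>i\<in>I1 <+> I2. u i x * v i y)" if "x \<in> A" "y \<in> A" for x y
  proof -
    have "M x y = (\<Sum>z\<in>A. (\<Sum>i\<in>I1. pa i x * (qa i y z * h z)) + (\<Sum>i\<in>I2. pb i y * (qb i x z * h z)) + (\<Sum>i\<in>I3. qc i x y * (pc i z * h z)))"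
      unfolding M_def using that dec by (intro sum.cong) (auto simp: sum_distrib_right sum_distrib_left algebra_simps)
    also have "\<dots> = (\<Sum>i\<in>I1. pa i x * (\<Sum>z\<in>A. qa i y z * h z)) + (\<Sum>i\<in>I2. pb i y * (\<Sum>z\<in>A. qb i x z * h z)) + (\<Sum>i\<in>I3. qc i x y * (\<Sum>z\<in>A. pc i z * h z))"
      by (simp only: sum.distrib swap_lemma)
    also have "(\<Sum>i\<in>I3. qc i x y * (\<Sum>z\<in>A. pc i z * h z)) = 0" using h(1) by simp
    finally show ?thesis using f1 f2 by (simp add: sum.Plus u_def v_def o_def mult.commute)
  qed
  have offM: "M x y = 0" if "x \<in> A" "y \<in> A" "x \<noteq> y" for x y
    unfolding M_def using off that by (intro sum.neutral) force
  have diagM: "M x x = F x x x * h x" if "x \<in> A" for x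
  proof -
    have "M x x = F x x x * h x + (\<Sum>z\<in>A - {x}. F x x z * h z)"
      unfolding M_def by (rule sum.remove[OF fA that])
    also have "(\<Sum>z\<in>A - {x}. F x x z * h z) = 0" using off that by (intro sum.neutral) fastforce
    finally show ?thesis by simp
  qed
  have eq: "{x\<in>A. M x x \<noteq> 0} = {a\<in>A. h a \<noteq> 0}"
    using diagM dg nz3 by fastforce
  have "card {x\<in>A. M x x \<noteq> 0} \<le> card (I1 <+> I2)"
    by (rule diag[OF _ fA decM offM]) (use f1 f2 in auto)
  then show ?thesis using h(2) f1 f2 eq by (simp add: card_Plus)
qed

definition c3 :: "nat \<times> nat \<times> nat \<Rightarrow> 3" where
 "c3 t = (case t of (p,q,r) \<Rightarrow> if p+q+r = 0 then 1 else if p+q+r = 2 then (if p = 2 \<or> q = 2 \<or> r = 2 then -1 else 1) else 0)"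

lemma c3_nz: "c3 (p,q,r) \<noteq> 0 \<Longrightarrow> p + q + r \<le> 2"
  by (auto simp: c3_def split: if_splits)

definition T3 :: "(nat \<times> nat \<times> nat) set" where "T3 = {0,1,2} \<times> {0,1,2} \<times> {0,1,2}"

lemma nested: "(\<Sum>t\<in>{0,1,2::nat} \<times> {0,1,2::nat} \<times> {0,1,2::nat}. g t) = (\<Sum>p\<in>{0,1,2}. \<Sum>q\<in>{0,1,2}. \<Sum>r\<in>{0,1,2}. g (p,q,r))"
  by (simp add: sum.cartesian_product) (simp add: ac_simps)

lemma coord: "1 - ((a::3)+b+c)^2 = (\<Sum>t\<in>T3. c3 t * a^(fst t) * b^(fst (snd t)) * c^(snd (snd t)))"
proof -
  have t: "(3::3) = 0" by simp
  show ?thesis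
    unfolding T3_def nested
    apply (simp add: c3_def)
    apply (simp add: algebra_simps power2_eq_square t)
    done
qed

definition mon :: "3^'n \<Rightarrow> ('n \<Rightarrow> nat) \<Rightarrow> 3" where "mon x a = (\<Prod>i\<in>UNIV. (x$i)^(a i))"
definition deg :: "('n::finite \<Rightarrow> nat) \<Rightarrow> nat" where "deg a = (\<Sum>i\<in>UNIV. a i)"

lemma expand:
  fixes x y z :: "3^'n"
  shows "(\<Prod>i\<in>UNIV. 1 - (x$i+y$i+z$i)^2) = (\<Sum>\<sigma>\<in>PiE UNIV (\<lambda>_. T3). (\<Prod>i\<in>UNIV. c3 (\<sigma> i)) * mon x (\<lambda>i. fst (\<sigma> i)) * mon y (\<lambda>i. fst (snd (\<sigma> i))) * mon z (\<lambda>i. snd (snd (\<sigma> i))))"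
proof -
  have "(\<Prod>i\<in>UNIV. 1 - (x$i+y$i+z$i)^2) = (\<Prod>i\<in>UNIV. \<Sum>t\<in>T3. c3 t * (x$i)^(fst t) * (y$i)^(fst (snd t)) * (z$i)^(snd (snd t)))"
    by (simp add: coord)
  also have "\<dots> = (\<Sum>\<sigma>\<in>PiE UNIV (\<lambda>_. T3). \<Prod>i\<in>UNIV. c3 (\<sigma> i) * (x$i)^(fst (\<sigma> i)) * (y$i)^(fst (snd (\<sigma> i))) * (z$i)^(snd (snd (\<sigma> i))))"
    by (rule prod_sum_PiE) (auto simp: T3_def)
  also have "\<dots> = (\<Sum>\<sigma>\<in>PiE UNIV (\<lambda>_. T3). (\<Prod>i\<in>UNIV. c3 (\<sigma> i)) * mon x (\<lambda>i. fst (\<sigma> i)) * mon y (\<lambda>i. fst (snd (\<sigma> i))) * mon z (\<lambda>i. snd (snd (\<sigma> i))))"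
    by (simp add: prod.distrib mon_def)
  finally show ?thesis .
qed

lemma group_sum:
  fixes m :: "'b \<Rightarrow> 'c::comm_ring_1"
  assumes "finite S" "finite G" "\<And>s. s \<in> S \<Longrightarrow> Q s \<Longrightarrow> phi s \<in> G"
  shows "(\<Sum>s\<in>S. if Q s then m (phi s) * r s else 0) = (\<Sum>a\<in>G. m a * (\<Sum>s\<in>{s\<in>S. Q s \<and> phi s = a}. r s))"
proof -
  have "(\<Sum>s\<in>S. if Q s then m (phi s) * r s else 0) = (\<Sum>s\<in>{s\<in>S. Q s}. m (phi s) * r s)"
    using assms(1) by (simp add: sum.inter_filter)
  also have "\<dots> = (\<Sum>a\<in>G. \<Sum>s\<in>{s\<in>{s\<in>S. Q s}. phi s = a}. m (phi s) * r s)"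
    using assms by (intro sum.group[symmetric]) auto
  also have "\<dots> = (\<Sum>a\<in>G. m a * (\<Sum>s\<in>{s\<in>S. Q s \<and> phi s = a}. r s))"
  proof (rule sum.cong[OF refl])
    fix a
    have "(\<Sum>s\<in>{s\<in>{s\<in>S. Q s}. phi s = a}. m (phi s) * r s) = (\<Sum>s\<in>{s\<in>S. Q s \<and> phi s = a}. m a * r s)"
      by (rule sum.cong) auto
    then show "(\<Sum>s\<in>{s\<in>{s\<in>S. Q s}. phi s = a}. m (phi s) * r s) = m a * (\<Sum>s\<in>{s\<in>S. Q s \<and> phi s = a}. r s)"
      by (simp add: sum_distrib_left)
  qed
  finally show ?thesis .
qed

lemma prod_monom: "finite I \<Longrightarrow> (\<Prod>i\<in>I. monom (1::'a::comm_semiring_1) (f i)) = monom 1 (\<Sum>i\<in>I. f i)"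
  by (induction I rule: finite_induct) (auto simp: mult_monom)

lemma trin: "trinomial CARD('n::finite) k = card {a \<in> PiE (UNIV::'n set) (\<lambda>_. {0..2::nat}). deg a = k}"
proof -
  define P where "P = PiE (UNIV::'n set) (\<lambda>_. {0..2::nat})"
  have fP: "finite P" unfolding P_def by (intro finite_PiE) auto
  have b: "[:1,1,1::nat:] = (\<Sum>j\<in>{0..2}. monom 1 j)"
    by (simp add: poly_eq_iff coeff_pCons numeral_2_eq_2 split: nat.split)
  have "[:1,1,1::nat:] ^ CARD('n) = (\<Prod>i\<in>(UNIV::'n set). \<Sum>j\<in>{0..2}. monom 1 j)"
    unfolding b prod_constant by (rule refl)
  also have "\<dots> = (\<Sum>a\<in>P. \<Prod>i\<in>UNIV. monom 1 (a i))"
    unfolding P_def by (rule prod_sum_PiE) auto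
  also have "\<dots> = (\<Sum>a\<in>P. monom 1 (deg a))"
    by (simp only: prod_monom[OF finite] deg_def)
  finally have e: "[:1,1,1::nat:] ^ CARD('n) = (\<Sum>a\<in>P. monom 1 (deg a))" .
  have "trinomial CARD('n) k = (\<Sum>a\<in>P. if deg a = k then 1 else 0)"
    unfolding trinomial_def e coeff_sum coeff_monom by (rule refl)
  also have "\<dots> = card {a\<in>P. deg a = k}"
    using fP by (simp add: sum.inter_filter[symmetric])
  finally show ?thesis unfolding P_def .
qed

theorem mainTheorem1:
  fixes A :: "(3 ^ 'n) set"
  assumes "\<forall>a\<in>A. \<forall>b\<in>A. \<forall>c\<in>A. a + b + c = 0 \<longrightarrow> a = b \<and> b = c"
  shows "card A \<le> 3 * (\<Sum>k = 0..(2 * CARD('n)) div 3. trinomial CARD('n) k)"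
proof -
  define n where "n = CARD('n)"
  define K where "K = (2 * n) div 3"
  define P where "P = (PiE (UNIV::'n set) (\<lambda>_. {0..2::nat}))"
  define G where "G = {a\<in>P. deg a \<le> K}"
  define S where "S = (PiE (UNIV::'n set) (\<lambda>_. T3))"
  define \<alpha> where "\<alpha> \<sigma> = (\<lambda>i. fst (\<sigma> i))" for \<sigma> :: "'n \<Rightarrow> nat \<times> nat \<times> nat"
  define \<beta> where "\<beta> \<sigma> = (\<lambda>i. fst (snd (\<sigma> i)))" for \<sigma> :: "'n \<Rightarrow> nat \<times> nat \<times> nat"
  define \<gamma> where "\<gamma> \<sigma> = (\<lambda>i. snd (snd (\<sigma> i)))" for \<sigma> :: "'n \<Rightarrow> nat \<times> nat \<times> nat"
  define C where "C \<sigma> = (\<Prod>i\<in>UNIV. c3 (\<sigma> i))" for \<sigma> :: "'n \<Rightarrow> nat \<times> nat \<times> nat"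
  define Q1 where "Q1 \<sigma> = (deg (\<alpha> \<sigma>) \<le> K)" for \<sigma>
  define Q2 where "Q2 \<sigma> = (\<not> deg (\<alpha> \<sigma>) \<le> K \<and> deg (\<beta> \<sigma>) \<le> K)" for \<sigma>
  define Q3 where "Q3 \<sigma> = (\<not> deg (\<alpha> \<sigma>) \<le> K \<and> \<not> deg (\<beta> \<sigma>) \<le> K \<and> deg (\<gamma> \<sigma>) \<le> K)" for \<sigma>
  define F where "F x y z = (\<Prod>i\<in>UNIV. 1 - (x$i+y$i+z$i)^2)" for x y z :: "3^'n"
  define q1 where "q1 a y z = (\<Sum>\<sigma>\<in>{\<sigma>\<in>S. Q1 \<sigma> \<and> \<alpha> \<sigma> = a}. C \<sigma> * mon y (\<beta> \<sigma>) * mon z (\<gamma> \<sigma>))" for a y z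
  define q2 where "q2 b x z = (\<Sum>\<sigma>\<in>{\<sigma>\<in>S. Q2 \<sigma> \<and> \<beta> \<sigma> = b}. C \<sigma> * mon x (\<alpha> \<sigma>) * mon z (\<gamma> \<sigma>))" for b x z
  define q3 where "q3 c x y = (\<Sum>\<sigma>\<in>{\<sigma>\<in>S. Q3 \<sigma> \<and> \<gamma> \<sigma> = c}. C \<sigma> * mon x (\<alpha> \<sigma>) * mon y (\<beta> \<sigma>))" for c x y
  have fS: "finite S" unfolding S_def T3_def by (intro finite_PiE) auto
  have fP: "finite P" unfolding P_def by (intro finite_PiE) auto
  have fG: "finite G" using fP G_def by auto
  have inP: "\<alpha> \<sigma> \<in> P \<and> \<beta> \<sigma> \<in> P \<and> \<gamma> \<sigma> \<in> P" if "\<sigma> \<in> S" for \<sigma>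
  proof -
    have "fst (\<sigma> i) \<le> 2 \<and> fst (snd (\<sigma> i)) \<le> 2 \<and> snd (snd (\<sigma> i)) \<le> 2" for i
    proof -
      have m: "\<sigma> i \<in> T3" using that by (auto simp: S_def PiE_iff)
      obtain p q r where e: "\<sigma> i = (p,q,r)" by (cases "\<sigma> i")
      show ?thesis using m unfolding T3_def e by auto
    qed
    then show ?thesis by (auto simp: P_def \<alpha>_def \<beta>_def \<gamma>_def PiE_iff)
  qed
  have Cz: "C \<sigma> = 0" if "\<sigma> \<in> S" "\<not> Q1 \<sigma>" "\<not> Q2 \<sigma>" "\<not> Q3 \<sigma>" for \<sigma>
  proof (rule ccontr)
    assume "C \<sigma> \<noteq> 0"
    then have nz: "c3 (\<sigma> i) \<noteq> 0" for i
      unfolding C_def using prod_zero[of UNIV "\<lambda>i. c3 (\<sigma> i)"] by auto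
    have le: "\<alpha> \<sigma> i + \<beta> \<sigma> i + \<gamma> \<sigma> i \<le> 2" for i
      using c3_nz[of "fst (\<sigma> i)" "fst (snd (\<sigma> i))" "snd (snd (\<sigma> i))"] nz[of i]
      by (simp add: \<alpha>_def \<beta>_def \<gamma>_def)
    have "deg (\<alpha> \<sigma>) + deg (\<beta> \<sigma>) + deg (\<gamma> \<sigma>) = (\<Sum>i\<in>UNIV. \<alpha> \<sigma> i + \<beta> \<sigma> i + \<gamma> \<sigma> i)"
      by (simp add: deg_def sum.distrib)
    also have "\<dots> \<le> (\<Sum>i\<in>(UNIV::'n set). 2)" by (rule sum_mono) (rule le)
    also have "\<dots> = 2 * n" by (simp add: n_def)
    finally have tot: "deg (\<alpha> \<sigma>) + deg (\<beta> \<sigma>) + deg (\<gamma> \<sigma>) \<le> 2 * n" .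
    have "K < deg (\<alpha> \<sigma>)" "K < deg (\<beta> \<sigma>)" "K < deg (\<gamma> \<sigma>)" using that by (auto simp: Q1_def Q2_def Q3_def)
    then have "K + 1 \<le> deg (\<alpha> \<sigma>)" "K + 1 \<le> deg (\<beta> \<sigma>)" "K + 1 \<le> deg (\<gamma> \<sigma>)" by simp_all
    then have s3: "(K+1)+(K+1)+(K+1) \<le> deg (\<alpha> \<sigma>) + deg (\<beta> \<sigma>) + deg (\<gamma> \<sigma>)"
      by (intro add_mono)
    have "2 * n < (K+1)+(K+1)+(K+1)" unfolding K_def by presburger
    then show False using s3 tot by linarith
  qed
  have dec: "F x y z = (\<Sum>a\<in>G. mon x a * q1 a y z) + (\<Sum>a\<in>G. mon y a * q2 a x z) + (\<Sum>a\<in>G. mon z a * q3 a x y)" for x y z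
  proof -
    define t1 where "t1 \<sigma> = (if Q1 \<sigma> then mon x (\<alpha> \<sigma>) * (C \<sigma> * mon y (\<beta> \<sigma>) * mon z (\<gamma> \<sigma>)) else 0)" for \<sigma>
    define t2 where "t2 \<sigma> = (if Q2 \<sigma> then mon y (\<beta> \<sigma>) * (C \<sigma> * mon x (\<alpha> \<sigma>) * mon z (\<gamma> \<sigma>)) else 0)" for \<sigma>
    define t3 where "t3 \<sigma> = (if Q3 \<sigma> then mon z (\<gamma> \<sigma>) * (C \<sigma> * mon x (\<alpha> \<sigma>) * mon y (\<beta> \<sigma>)) else 0)" for \<sigma>
    have "F x y z = (\<Sum>\<sigma>\<in>S. C \<sigma> * mon x (\<alpha> \<sigma>) * mon y (\<beta> \<sigma>) * mon z (\<gamma> \<sigma>))"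
      unfolding F_def expand S_def C_def \<alpha>_def \<beta>_def \<gamma>_def ..
    also have "\<dots> = (\<Sum>\<sigma>\<in>S. t1 \<sigma> + t2 \<sigma> + t3 \<sigma>)"
    proof (rule sum.cong[OF refl])
      fix \<sigma> assume s: "\<sigma> \<in> S"
      show "C \<sigma> * mon x (\<alpha> \<sigma>) * mon y (\<beta> \<sigma>) * mon z (\<gamma> \<sigma>) = t1 \<sigma> + t2 \<sigma> + t3 \<sigma>"
        using Cz[OF s] by (auto simp: t1_def t2_def t3_def Q1_def Q2_def Q3_def ac_simps)
    qed
    also have "\<dots> = (\<Sum>\<sigma>\<in>S. t1 \<sigma>) + (\<Sum>\<sigma>\<in>S. t2 \<sigma>) + (\<Sum>\<sigma>\<in>S. t3 \<sigma>)"
      by (simp only: sum.distrib)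
    also have "(\<Sum>\<sigma>\<in>S. t1 \<sigma>) = (\<Sum>a\<in>G. mon x a * q1 a y z)"
      unfolding t1_def q1_def
      by (rule group_sum[where m="mon x" and phi=\<alpha>, OF fS fG]) (use inP in \<open>auto simp: G_def Q1_def\<close>)
    also have "(\<Sum>\<sigma>\<in>S. t2 \<sigma>) = (\<Sum>a\<in>G. mon y a * q2 a x z)"
      unfolding t2_def q2_def
      by (rule group_sum[where m="mon y" and phi=\<beta>, OF fS fG]) (use inP in \<open>auto simp: G_def Q2_def\<close>)
    also have "(\<Sum>\<sigma>\<in>S. t3 \<sigma>) = (\<Sum>a\<in>G. mon z a * q3 a x y)"
      unfolding t3_def q3_def
      by (rule group_sum[where m="mon z" and phi=\<gamma>, OF fS fG]) (use inP in \<open>auto simp: G_def Q3_def\<close>)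
    finally show ?thesis .
  qed
  have fA: "finite A" by simp
  have off: "x = y \<and> y = z" if "x \<in> A" "y \<in> A" "z \<in> A" "F x y z \<noteq> 0" for x y z
  proof -
    have "x + y + z = 0"
    proof (rule ccontr)
      assume "x + y + z \<noteq> 0"
      then obtain i where i: "x$i + y$i + z$i \<noteq> 0" by (auto simp: vec_eq_iff)
      then have "1 - (x$i + y$i + z$i)^2 = 0" using sq3[OF i] by (simp add: power2_eq_square)
      then have "F x y z = 0" unfolding F_def by (intro prod_zero) auto
      then show False using that by simp
    qed
    then show ?thesis using assms that by blast
  qed
  have dg: "F x x x \<noteq> 0" for x
    unfolding F_def three3 by simp
  have "card A \<le> card G + card G + card G"
    by (rule slice[where F=F and pa="\<lambda>a x. mon x a" and qa=q1 and pb="\<lambda>a y. mon y a" and qb=q2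
          and pc="\<lambda>a z. mon z a" and qc=q3, OF fG fG fG fA]) (use dec off dg in auto)
  moreover have "card G = (\<Sum>k = 0..K. trinomial n k)"
  proof -
    have "card G = (\<Sum>a\<in>G. 1)" by simp
    also have "\<dots> = (\<Sum>k\<in>{0..K}. \<Sum>a\<in>{a\<in>G. deg a = k}. 1)"
      using fG by (intro sum.group[symmetric]) (auto simp: G_def)
    also have "\<dots> = (\<Sum>k\<in>{0..K}. trinomial n k)"
    proof (rule sum.cong[OF refl])
      fix k assume "k \<in> {0..K}"
      then have "{a\<in>G. deg a = k} = {a\<in>P. deg a = k}" by (auto simp: G_def)
      then show "(\<Sum>a\<in>{a\<in>G. deg a = k}. 1) = trinomial n k"
        by (simp add: trin n_def P_def)
    qed
    finally show ?thesis .
  qed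
  ultimately show ?thesis by (simp add: K_def n_def)
qed

end
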